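(* Let $X$ be a scalable monoid over a ring $R$. If $X$ is equipped with a dense closed set $U$ of unit elements, then $X$ is distributive: for all orbitoids $\mathsf{A},\mathsf{B}\in X/{\sim}$, all $x,y\in\mathsf{A}$ and all $z\in\mathsf{B}$, $(x+y)z=xz+yz$ and $z(x+y)=zx+zy$.
   Context: A scalable monoid over a (unital, associative) ring $R$ is a monoid $X$ (identity $1_X$, product written $xy$) together with a map $R\times X\to X$, $(\alpha,x)\mapsto\alpha\cdot x$, such that $1\cdot x=x$, $\alpha\cdot(\beta\cdot x)=\alpha\beta\cdot x$ and $\alpha\cdot(xy)=(\alpha\cdot x)y=x(\alpha\cdot y)$. On $X$, $x\sim y$ iff $\alpha\cdot x=\beta\cdot y$ for some $\alpha,\beta\in R$; its classes are orbitoids, $[x]$ is the orbitoid of $x$, and $X/{\sim}$ is the set of orbitoids. A unit element for an orbitoid $\mathsf{C}$ is some $u\in\mathsf{C}$ such that every $x\in\mathsf{C}$ equals $\lambda\cdot u$ for some $\lambda\in R$ and $\lambda\cdot u=\lambda'\cdot u$ implies $\lambda=\lambda'$; a unit element of $X$ means a unit element for its own orbitoid. A set $U\subseteq X$ is dense if for every $x\in X$ there is $u\in U$ with $u\sim x$, and closed if $u,v\in U$ implies $uv\in U$. For $x,y$ in an orbitoid with unit element $u$, $x=\rho\cdot u$, $y=\sigma\cdot u$, the sum is $x+y:=(\rho+\sigma)\cdot u$ (independent of the choice of $u$). *)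

theory Defs
  imports Main
begin

definition scalable_monoid :: "('x \<Rightarrow> 'x \<Rightarrow> 'x) \<Rightarrow> 'x \<Rightarrow> ('r::ring_1 \<Rightarrow> 'x \<Rightarrow> 'x) \<Rightarrow> bool" where
  "scalable_monoid mul e sc \<longleftrightarrow>
     (\<forall>x y z. mul (mul x y) z = mul x (mul y z)) \<and>
     (\<forall>x. mul e x = x \<and> mul x e = x) \<and>
     (\<forall>x. sc 1 x = x) \<and>
     (\<forall>a b x. sc a (sc b x) = sc (a * b) x) \<and>
     (\<forall>a x y. sc a (mul x y) = mul (sc a x) y \<and> sc a (mul x y) = mul x (sc a y))"

definition sm_sim :: "('r \<Rightarrow> 'x \<Rightarrow> 'x) \<Rightarrow> 'x \<Rightarrow> 'x \<Rightarrow> bool" where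
  "sm_sim sc x y \<longleftrightarrow> (\<exists>a b. sc a x = sc b y)"

definition orbitoid :: "('r \<Rightarrow> 'x \<Rightarrow> 'x) \<Rightarrow> 'x \<Rightarrow> 'x set" where
  "orbitoid sc x = {y. sm_sim sc x y}"

definition orbitoids :: "('r \<Rightarrow> 'x \<Rightarrow> 'x) \<Rightarrow> 'x set set" where
  "orbitoids sc = range (orbitoid sc)"

definition unit_for :: "('r \<Rightarrow> 'x \<Rightarrow> 'x) \<Rightarrow> 'x set \<Rightarrow> 'x \<Rightarrow> bool" where
  "unit_for sc C u \<longleftrightarrow> u \<in> C \<and> (\<forall>x\<in>C. \<exists>l. x = sc l u) \<and>
     (\<forall>l l'. sc l u = sc l' u \<longrightarrow> l = l')"

definition unit_elem :: "('r \<Rightarrow> 'x \<Rightarrow> 'x) \<Rightarrow> 'x \<Rightarrow> bool" where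
  "unit_elem sc u \<longleftrightarrow> unit_for sc (orbitoid sc u) u"

definition dense :: "('r \<Rightarrow> 'x \<Rightarrow> 'x) \<Rightarrow> 'x set \<Rightarrow> bool" where
  "dense sc U \<longleftrightarrow> (\<forall>x. \<exists>u\<in>U. sm_sim sc u x)"

definition closed_set :: "('x \<Rightarrow> 'x \<Rightarrow> 'x) \<Rightarrow> 'x set \<Rightarrow> bool" where
  "closed_set mul U \<longleftrightarrow> (\<forall>u\<in>U. \<forall>v\<in>U. mul u v \<in> U)"

definition sm_add :: "('r::ring_1 \<Rightarrow> 'x \<Rightarrow> 'x) \<Rightarrow> 'x \<Rightarrow> 'x \<Rightarrow> 'x" where
  "sm_add sc x y = (SOME s. \<exists>u r q. unit_for sc (orbitoid sc x) u \<and>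
      x = sc r u \<and> y = sc q u \<and> s = sc (r + q) u)"

end

theory Submission
  imports Defs
begin

lemma sm_L0:
  assumes "scalable_monoid mul e sc"
  shows "sc a (sc b x) = sc (a*b) x" "mul (sc a x) y = sc a (mul x y)"
    "mul x (sc a y) = sc a (mul x y)" "sc 1 x = x"
proof -
  have "\<forall>a b x. sc a (sc b x) = sc (a*b) x" "\<forall>a x y. sc a (mul x y) = mul (sc a x) y"
    "\<forall>a x y. sc a (mul x y) = mul x (sc a y)" "\<forall>x. sc 1 x = x"
    using assms unfolding scalable_monoid_def by blast+
  thus "sc a (sc b x) = sc (a*b) x" "mul (sc a x) y = sc a (mul x y)"
    "mul x (sc a y) = sc a (mul x y)" "sc 1 x = x" by metis+
qed

lemma sm_L1:
  assumes "unit_elem sc u" "sm_sim sc u v"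
  shows "\<exists>l. v = sc l u"
proof -
  have "v \<in> orbitoid sc u" using assms(2) unfolding orbitoid_def by simp
  moreover have "\<forall>x\<in>orbitoid sc u. \<exists>l. x = sc l u"
    using assms(1) unfolding unit_elem_def unit_for_def by blast
  ultimately show ?thesis by blast
qed

lemma sm_L2:
  assumes sm: "scalable_monoid mul e sc" and U: "\<forall>u\<in>U. unit_elem sc u"
    and d: "dense sc U" and u: "u \<in> U" and s: "sm_sim sc (sc r u) y"
  shows "\<exists>m. y = sc m u"
proof -
  obtain v where v: "v \<in> U" "sm_sim sc v y" using d unfolding dense_def by auto
  have "unit_elem sc v" using U v(1) by blast
  then obtain m' where m': "y = sc m' v" using sm_L1[OF _ v(2)] by blast
  obtain a b where ab: "sc a (sc r u) = sc b y" using s unfolding sm_sim_def by blast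
  have "sc (a*r) u = sc a (sc r u)" by (rule sm_L0(1)[OF sm, symmetric])
  also have "\<dots> = sc b y" by (rule ab)
  also have "\<dots> = sc b (sc m' v)" using m' by (rule arg_cong)
  also have "\<dots> = sc (b*m') v" by (rule sm_L0(1)[OF sm])
  finally have "sm_sim sc u v" unfolding sm_sim_def by blast
  moreover have "unit_elem sc u" using U u by blast
  ultimately obtain n where n: "v = sc n u" using sm_L1[of sc u v] by blast
  have "y = sc m' (sc n u)" using m' n by simp
  also have "\<dots> = sc (m'*n) u" by (rule sm_L0(1)[OF sm])
  finally show ?thesis by blast
qed

lemma sm_L3:
  assumes sm: "scalable_monoid mul e sc" and U: "\<forall>u\<in>U. unit_elem sc u"
    and d: "dense sc U" and u: "u \<in> U" and x: "x = sc r u" and y: "y = sc q u"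
  shows "sm_add sc x y = sc (r+q) u"
proof -
  have uniq: "\<And>l l'. sc l u = sc l' u \<Longrightarrow> l = l'"
    using U u unfolding unit_elem_def unit_for_def by blast
  have uf: "unit_for sc (orbitoid sc x) u"
    unfolding unit_for_def
  proof (intro conjI ballI allI impI)
    have "sc 1 x = sc r u" using x sm_L0(4)[OF sm] by simp
    thus "u \<in> orbitoid sc x" unfolding orbitoid_def sm_sim_def by blast
    fix t assume "t \<in> orbitoid sc x"
    hence "sm_sim sc x t" unfolding orbitoid_def by simp
    hence "sm_sim sc (sc r u) t" using x by simp
    thus "\<exists>l. t = sc l u" by (rule sm_L2[OF sm U d u])
  next
    fix l l' assume "sc l u = sc l' u"
    thus "l = l'" by (rule uniq)
  qed
  let ?P = "\<lambda>s. \<exists>u r q. unit_for sc (orbitoid sc x) u \<and>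
      x = sc r u \<and> y = sc q u \<and> s = sc (r + q) u"
  have ex: "?P (sc (r+q) u)"
    by (rule exI[of _ u], rule exI[of _ r], rule exI[of _ q]) (intro conjI uf x y refl)
  have all: "s = sc (r+q) u" if Ps: "?P s" for s
  proof -
    obtain u' r' q' where h: "unit_for sc (orbitoid sc x) u'" "x = sc r' u'" "y = sc q' u'"
      "s = sc (r' + q') u'" using Ps by blast
    have "u' \<in> orbitoid sc x" using h(1) by (simp add: unit_for_def)
    moreover have "\<forall>t\<in>orbitoid sc x. \<exists>l. t = sc l u" using uf by (simp add: unit_for_def)
    ultimately obtain m where m: "u' = sc m u" by blast
    have "sc r u = sc r' u'" using x h(2) by (rule trans[OF sym])
    also have "\<dots> = sc r' (sc m u)" using m by (rule arg_cong)
    also have "\<dots> = sc (r'*m) u" by (rule sm_L0(1)[OF sm])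
    finally have r: "r = r'*m" by (rule uniq)
    have "sc q u = sc q' u'" using y h(3) by (rule trans[OF sym])
    also have "\<dots> = sc q' (sc m u)" using m by (rule arg_cong)
    also have "\<dots> = sc (q'*m) u" by (rule sm_L0(1)[OF sm])
    finally have q: "q = q'*m" by (rule uniq)
    have "s = sc (r' + q') (sc m u)" using h(4) m by simp
    also have "\<dots> = sc ((r' + q')*m) u" by (rule sm_L0(1)[OF sm])
    finally show ?thesis unfolding r q distrib_right .
  qed
  show ?thesis unfolding sm_add_def by (rule some_equality[of ?P, OF ex all])
qed

theorem proposition2p39:
  fixes mul :: "'x \<Rightarrow> 'x \<Rightarrow> 'x" and e :: 'x and sc :: "'r::ring_1 \<Rightarrow> 'x \<Rightarrow> 'x"
    and U :: "'x set"
  assumes "scalable_monoid mul e sc"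
    and "\<forall>u\<in>U. unit_elem sc u"
    and "dense sc U"
    and "closed_set mul U"
  shows "\<forall>A\<in>orbitoids sc. \<forall>B\<in>orbitoids sc. \<forall>x\<in>A. \<forall>y\<in>A. \<forall>z\<in>B.
           mul (sm_add sc x y) z = sm_add sc (mul x z) (mul y z) \<and>
           mul z (sm_add sc x y) = sm_add sc (mul z x) (mul z y)"
proof (intro ballI)
  note sm = assms(1) and U = assms(2) and d = assms(3)
  fix A B x y z assume A: "A \<in> orbitoids sc" and "B \<in> orbitoids sc" and xA: "x \<in> A"
    and yA: "y \<in> A" and "z \<in> B"
  obtain w where w: "A = orbitoid sc w" using A unfolding orbitoids_def by auto
  have wx: "sm_sim sc w x" and wy: "sm_sim sc w y" using xA yA w unfolding orbitoid_def by auto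
  obtain u where u: "u \<in> U" "sm_sim sc u w" using d unfolding dense_def by auto
  have "unit_elem sc u" using U u(1) by blast
  then obtain l where l: "w = sc l u" using sm_L1[OF _ u(2)] by blast
  have "sm_sim sc (sc l u) x" "sm_sim sc (sc l u) y" using wx wy l by simp_all
  then obtain r q where r: "x = sc r u" and q: "y = sc q u"
    using sm_L2[OF sm U d u(1)] by meson
  obtain v where v: "v \<in> U" "sm_sim sc v z" using d unfolding dense_def by auto
  have "unit_elem sc v" using U v(1) by blast
  then obtain k where k: "z = sc k v" using sm_L1[OF _ v(2)] by blast
  have uv: "mul u v \<in> U" "mul v u \<in> U" using u(1) v(1) assms(4) unfolding closed_set_def by auto
  have s1: "sm_add sc x y = sc (r+q) u" using sm_L3[OF sm U d u(1) r q] .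
  have xz: "mul x z = sc (k*r) (mul u v)" "mul y z = sc (k*q) (mul u v)"
    using r q k sm_L0[OF sm] by simp_all
  have s2: "sm_add sc (mul x z) (mul y z) = sc (k*r+k*q) (mul u v)"
    by (rule sm_L3[OF sm U d uv(1) xz(1) xz(2)])
  have zx: "mul z x = sc (r*k) (mul v u)" "mul z y = sc (q*k) (mul v u)"
    using r q k sm_L0[OF sm] by simp_all
  have s3: "sm_add sc (mul z x) (mul z y) = sc (r*k+q*k) (mul v u)"
    by (rule sm_L3[OF sm U d uv(2) zx(1) zx(2)])
  show "mul (sm_add sc x y) z = sm_add sc (mul x z) (mul y z) \<and>
        mul z (sm_add sc x y) = sm_add sc (mul z x) (mul z y)"
    using s1 s2 s3 k sm_L0[OF sm] by (simp add: distrib_right distrib_left)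
qed

end
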